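(* Let $m\ge 1$, $P,Q\ge 0$ be integers with $N=P+Q\ge1$, let $D$, $F_1,\ldots,F_m$, $\mathcal{E}$, $d$ and $G_F:\mathcal{E}\to\mathcal{E}$ be as described in the context, and assume that the state network of $G_F$ is strongly connected. Then the set of periodic points of $G_F$ is dense in the metric space $(\mathcal{E},d)$; that is, for every $E\in\mathcal{E}$ and every $\varepsilon>0$ there exist $E'\in\mathcal{E}$ and $k\ge1$ with $G_F^k(E')=E'$ and $d(E,E')<\varepsilon$.
   Context: Let $D=\{k\,2^{-Q}: k=0,1,\ldots,2^N-1\}$ be the set of $N$-bit fixed-point numbers; each $x\in D$ is written in binary as $x=x_{P-1}x_{P-2}\ldots x_0.x_{-1}\ldots x_{-Q}$ with digits $x_j\in\{0,1\}$. For $x,y\in D$ let $x\cdot y$, $x+y$ and $\overline{x}$ denote bitwise AND, bitwise OR and bitwise NOT (complement of every one of the $N$ digits), which are again elements of $D$. Let $F_1,\ldots,F_m:D^m\to D$ be arbitrary functions. Let $\Sigma$ be the set of one-sided infinite sequences $w=w^1w^2\ldots$ with $w^k\in D$, and $\sigma:\Sigma\to\Sigma$ the left shift $\sigma(w)=w^2w^3\ldots$. Let $\mathcal{E}=\Sigma^m\times D^m$, with elements $E=((w_1,\ldots,w_m),(x_1,\ldots,x_m))$. Define $G_F:\mathcal{E}\to\mathcal{E}$ by $G_F((w_1,\ldots,w_m),x)=((\sigma(w_1),\ldots,\sigma(w_m)),(H_1,\ldots,H_m))$, where $x=(x_1,\ldots,x_m)$ and $H_i=(x_i\cdot\overline{w_i^1})+(F_i(x)\cdot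 w_i^1)$ (i.e. bit $j$ of $x_i$ is replaced by bit $j$ of $F_i(x)$ exactly when bit $j$ of $w_i^1$ is $1$). The metric on $\mathcal{E}$ is $d(E,\hat E)=\sum_{i=1}^m\sum_{k=1}^\infty \frac{|w_i^k-\hat w_i^k|}{2^{Nk}}+\sqrt{\sum_{i=1}^m (x_i-\hat x_i)^2}$. The state network of $G_F$ is the directed graph whose vertex set is $D^m$, with an edge from $\hat x$ to $\tilde x$ whenever there is some $(w_1,\ldots,w_m)\in\Sigma^m$ such that the $D^m$-component of $G_F((w_1,\ldots,w_m),\hat x)$ equals $\tilde x$. It is strongly connected if every vertex is reachable from every other vertex by a directed path. *)

theory Defs
  imports Complex_Main
begin

definition fxD :: "nat \<Rightarrow> nat \<Rightarrow> real set" where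
  "fxD P Q = {real k / 2 ^ Q | k. k < 2 ^ (P + Q)}"

text \<open>The integer code k of x = k 2^-Q; bit j of x (j = -Q..P-1) is bit (j+Q) of k.\<close>
definition fxcode :: "nat \<Rightarrow> real \<Rightarrow> nat" where
  "fxcode Q x = nat \<lfloor>x * 2 ^ Q\<rfloor>"

definition fxand :: "nat \<Rightarrow> real \<Rightarrow> real \<Rightarrow> real" where
  "fxand Q x y = real (Bit_Operations.and (fxcode Q x) (fxcode Q y)) / 2 ^ Q"

definition fxor :: "nat \<Rightarrow> real \<Rightarrow> real \<Rightarrow> real" where
  "fxor Q x y = real (Bit_Operations.or (fxcode Q x) (fxcode Q y)) / 2 ^ Q"

definition fxnot :: "nat \<Rightarrow> nat \<Rightarrow> real \<Rightarrow> real" where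
  "fxnot P Q x = real (2 ^ (P + Q) - 1 - fxcode Q x) / 2 ^ Q"

text \<open>D^m: tuples indexed by i < m, zero outside (normalisation).\<close>
definition fxDm :: "nat \<Rightarrow> nat \<Rightarrow> nat \<Rightarrow> (nat \<Rightarrow> real) set" where
  "fxDm P Q m = {x. (\<forall>i<m. x i \<in> fxD P Q) \<and> (\<forall>i\<ge>m. x i = 0)}"

text \<open>The phase space \<E> = \<Sigma>^m \<times> D^m. W i k is w_i^(k+1); components i \<ge> m are zero.\<close>
definition phase :: "nat \<Rightarrow> nat \<Rightarrow> nat \<Rightarrow> ((nat \<Rightarrow> nat \<Rightarrow> real) \<times> (nat \<Rightarrow> real)) set" where
  "phase P Q m = {(W, x). (\<forall>i<m. \<forall>k. W i k \<in> fxD P Q) \<and> (\<forall>i\<ge>m. W i = (\<lambda>_. 0))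
                         \<and> x \<in> fxDm P Q m}"

definition GF :: "nat \<Rightarrow> nat \<Rightarrow> nat \<Rightarrow> (nat \<Rightarrow> (nat \<Rightarrow> real) \<Rightarrow> real)
   \<Rightarrow> (nat \<Rightarrow> nat \<Rightarrow> real) \<times> (nat \<Rightarrow> real) \<Rightarrow> (nat \<Rightarrow> nat \<Rightarrow> real) \<times> (nat \<Rightarrow> real)" where
  "GF P Q m F E = (let W = fst E; x = snd E in
     ((\<lambda>i k. W i (Suc k)),
      (\<lambda>i. if i < m then fxor Q (fxand Q (x i) (fxnot P Q (W i 0))) (fxand Q (F i x) (W i 0))
           else 0)))"

definition dE :: "nat \<Rightarrow> nat \<Rightarrow> nat \<Rightarrow> (nat \<Rightarrow> nat \<Rightarrow> real) \<times> (nat \<Rightarrow> real)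
   \<Rightarrow> (nat \<Rightarrow> nat \<Rightarrow> real) \<times> (nat \<Rightarrow> real) \<Rightarrow> real" where
  "dE P Q m E E' =
     (\<Sum>i<m. \<Sum>k. \<bar>fst E i k - fst E' i k\<bar> / 2 ^ ((P + Q) * Suc k))
     + sqrt (\<Sum>i<m. (snd E i - snd E' i)\<^sup>2)"

definition state_edges :: "nat \<Rightarrow> nat \<Rightarrow> nat \<Rightarrow> (nat \<Rightarrow> (nat \<Rightarrow> real) \<Rightarrow> real)
   \<Rightarrow> ((nat \<Rightarrow> real) \<times> (nat \<Rightarrow> real)) set" where
  "state_edges P Q m F = {(a, b). a \<in> fxDm P Q m \<and> b \<in> fxDm P Q m \<and>
      (\<exists>W. (W, a) \<in> phase P Q m \<and> snd (GF P Q m F (W, a)) = b)}"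

definition strongly_connected_sn :: "nat \<Rightarrow> nat \<Rightarrow> nat \<Rightarrow> (nat \<Rightarrow> (nat \<Rightarrow> real) \<Rightarrow> real) \<Rightarrow> bool" where
  "strongly_connected_sn P Q m F =
     (\<forall>a\<in>fxDm P Q m. \<forall>b\<in>fxDm P Q m. (a, b) \<in> (state_edges P Q m F)\<^sup>*)"

end

theory Submission
  imports Defs
begin

lemma l_and: assumes "(y::nat) < 2^n" shows "Bit_Operations.and x y < 2^n"
proof -
  have "int (Bit_Operations.and x y) = Bit_Operations.and (int x) (int y)" by (rule of_nat_and_eq)
  also have "\<dots> \<le> int y" by (rule AND_upper2) simp
  finally have "Bit_Operations.and x y \<le> y" by simp
  thus ?thesis using assms by simp
qed

lemma l_or: assumes "(y::nat) < 2^n" "x < 2^n" shows "Bit_Operations.or x y < 2^n"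
proof -
  have "take_bit n (Bit_Operations.or x y) = Bit_Operations.or (take_bit n x) (take_bit n y)"
    by (rule take_bit_or)
  also have "\<dots> = Bit_Operations.or x y" using assms by (simp add: take_bit_nat_eq_self)
  finally show ?thesis by (simp only: take_bit_nat_eq_self_iff)
qed

lemma code_div: "fxcode Q (real k / 2 ^ Q) = k"
  by (simp add: fxcode_def)

lemma fxD_code: "v \<in> fxD P Q \<Longrightarrow> fxcode Q v < 2 ^ (P + Q)"
  by (auto simp: fxD_def code_div)

lemma fxD_bounds: assumes "v \<in> fxD P Q" shows "0 \<le> v" "v \<le> 2 ^ P"
proof -
  obtain k where k: "v = real k / 2 ^ Q" "k < 2 ^ (P + Q)" using assms by (auto simp: fxD_def)
  have "real k \<le> 2 ^ (P + Q)" using k(2)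
    by (metis less_imp_le of_nat_le_iff of_nat_numeral of_nat_power)
  hence "real k \<le> 2 ^ P * 2 ^ Q" by (simp add: power_add)
  thus "v \<le> 2 ^ P" using k(1) by (simp add: divide_le_eq)
  show "0 \<le> v" using k(1) by simp
qed

lemma fxor_in:
  assumes "fxcode Q a < 2 ^ (P + Q)" "fxcode Q d < 2 ^ (P + Q)"
  shows "fxor Q (fxand Q a b) (fxand Q c d) \<in> fxD P Q"
proof -
  have 1: "fxcode Q (fxand Q a b) < 2 ^ (P+Q)"
    unfolding fxand_def code_div using l_and[OF assms(1), of "fxcode Q b"]
    by (simp add: and.commute)
  have 2: "fxcode Q (fxand Q c d) < 2 ^ (P+Q)"
    unfolding fxand_def code_div using l_and[OF assms(2), of "fxcode Q c"] by simp
  show ?thesis unfolding fxor_def fxD_def using l_or[OF 2 1] by blast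
qed

lemma fxnot_code: "fxcode Q (fxnot P Q v) < 2 ^ (P + Q)"
  unfolding fxnot_def code_div by simp

primrec run :: "nat \<Rightarrow> nat \<Rightarrow> nat \<Rightarrow> (nat \<Rightarrow> (nat \<Rightarrow> real) \<Rightarrow> real) \<Rightarrow> (nat \<Rightarrow> nat \<Rightarrow> real)
   \<Rightarrow> nat \<Rightarrow> (nat \<Rightarrow> real) \<Rightarrow> (nat \<Rightarrow> real)" where
  "run P Q m F C 0 y = y"
| "run P Q m F C (Suc j) y = snd (GF P Q m F ((\<lambda>i k. C j i), run P Q m F C j y))"

lemma GF_pair: "GF P Q m F (A, z) = ((\<lambda>i k. A i (Suc k)),
   (\<lambda>i. if i < m then fxor Q (fxand Q (z i) (fxnot P Q (A i 0))) (fxand Q (F i z) (A i 0)) else 0))"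
  by (simp add: GF_def)

lemma GF_pow: "(GF P Q m F ^^ k) (V, y) = ((\<lambda>i j. V i (j + k)), run P Q m F (\<lambda>t i. V i t) k y)"
proof (induction k)
  case 0 then show ?case by simp
next
  case (Suc k)
  have eq: "(GF P Q m F ^^ Suc k) (V, y) = GF P Q m F ((\<lambda>i j. V i (j + k)), run P Q m F (\<lambda>t i. V i t) k y)"
    by (simp only: funpow.simps comp_def Suc.IH)
  show ?case unfolding eq GF_pair run.simps by (simp add: fun_eq_iff)
qed

lemma run_cong: "(\<forall>t<j. C t = C' t) \<Longrightarrow> run P Q m F C j y = run P Q m F C' j y"
  by (induction j) auto

lemma run_add: "run P Q m F C (n + j) y = run P Q m F (\<lambda>t. C (n + t)) j (run P Q m F C n y)"
  by (induction j) auto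

lemma step_in:
  assumes F: "\<forall>i<m. \<forall>x\<in>fxDm P Q m. F i x \<in> fxD P Q"
    and y: "y \<in> fxDm P Q m" and c: "\<forall>i<m. c i \<in> fxD P Q"
  shows "snd (GF P Q m F ((\<lambda>i k. c i), y)) \<in> fxDm P Q m"
proof -
  have "fxor Q (fxand Q (y i) (fxnot P Q (c i))) (fxand Q (F i y) (c i)) \<in> fxD P Q" if "i < m" for i
    apply (rule fxor_in)
    using y c that by (auto simp: fxDm_def intro: fxD_code)
  thus ?thesis by (auto simp: GF_def Let_def fxDm_def)
qed

lemma run_in:
  assumes F: "\<forall>i<m. \<forall>x\<in>fxDm P Q m. F i x \<in> fxD P Q"
    and y: "y \<in> fxDm P Q m" and c: "\<forall>t<j. \<forall>i<m. C t i \<in> fxD P Q"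
  shows "run P Q m F C j y \<in> fxDm P Q m"
  using c by (induction j) (auto intro!: step_in[OF F] simp: y)

lemma path:
  assumes "(a, b) \<in> (state_edges P Q m F)\<^sup>*"
  shows "\<exists>L C. (\<forall>t<L. (\<forall>i<m. C t i \<in> fxD P Q) \<and> (\<forall>i\<ge>m. C t i = 0)) \<and> run P Q m F C L a = b"
  using assms
proof (induction rule: rtrancl_induct)
  case base
  show ?case by (rule exI[of _ 0]) auto
next
  case (step b c)
  obtain L C where LC: "\<forall>t<L. (\<forall>i<m. C t i \<in> fxD P Q) \<and> (\<forall>i\<ge>m. C t i = 0)"
    "run P Q m F C L a = b" using step.IH by blast
  obtain W where W: "(W, b) \<in> phase P Q m" "snd (GF P Q m F (W, b)) = c"
    using step.hyps(2) by (auto simp: state_edges_def)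
  define C' where "C' = C(L := (\<lambda>i. W i 0))"
  have "run P Q m F C' L a = b" using LC(2) run_cong[of L C' C] by (simp add: C'_def)
  hence "run P Q m F C' (Suc L) a = c" using W(2) by (simp add: C'_def GF_def Let_def)
  moreover have "\<forall>t<Suc L. (\<forall>i<m. C' t i \<in> fxD P Q) \<and> (\<forall>i\<ge>m. C' t i = 0)"
    using LC(1) W(1) by (auto simp: C'_def phase_def less_Suc_eq)
  ultimately show ?case by blast
qed

lemma tail_bound:
  fixes g :: "nat \<Rightarrow> real"
  assumes "\<forall>k<n. g k = 0" "\<forall>k. 0 \<le> g k \<and> g k \<le> B * (1/2) ^ Suc k"
  shows "suminf g \<le> B * (1/2) ^ n"
proof -
  have sg: "summable (\<lambda>k. B * (1/2::real) ^ Suc k)"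
    by (intro summable_mult summable_geometric_iff[THEN iffD2, THEN summable_Suc_iff[THEN iffD2]]) simp
  have sg2: "summable (\<lambda>k. (1/2::real) ^ Suc k)"
    using summable_geometric_iff[of "1/2::real"] summable_Suc_iff by force
  have s: "summable g"
    by (rule summable_comparison_test[OF _ sg]) (use assms in auto)
  have "suminf g = (\<Sum>k. g (k + n)) + (\<Sum>i<n. g i)" by (rule suminf_split_initial_segment[OF s])
  also have "(\<Sum>i<n. g i) = 0" using assms(1) by simp
  finally have eq: "suminf g = (\<Sum>k. g (k + n))" by simp
  have s2: "summable (\<lambda>k. g (k + n))" using s by (simp add: summable_iff_shift)
  have le: "g (k + n) \<le> B * (1/2) ^ n * (1/2) ^ Suc k" for k
    using assms(2)[rule_format, of "k+n"] by (simp add: power_add mult_ac)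
  have "(\<Sum>k. g (k + n)) \<le> (\<Sum>k. B * (1/2) ^ n * (1/2::real) ^ Suc k)"
    by (rule suminf_le[OF le s2]) (intro summable_mult sg2)
  also have "\<dots> = B * (1/2) ^ n * (\<Sum>k. (1/2::real) ^ Suc k)"
    by (rule suminf_mult[OF sg2])
  also have "(\<Sum>k. (1/2::real) ^ Suc k) = 1"
  proof -
    have "(\<Sum>k. (1/2::real) ^ Suc k) = (1/2) * (\<Sum>k. (1/2::real) ^ k)"
      using suminf_mult[of "\<lambda>k. (1/2::real)^k" "1/2"] summable_geometric[of "1/2::real"] by simp
    also have "(\<Sum>k. (1/2::real) ^ k) = 2" using suminf_geometric[of "1/2::real"] by simp
    finally show ?thesis by simp
  qed
  finally show ?thesis using eq by simp
qed

theorem theorem1: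
  fixes P Q m :: nat and F :: "nat \<Rightarrow> (nat \<Rightarrow> real) \<Rightarrow> real"
  assumes "m \<ge> 1" and "P + Q \<ge> 1"
    and "\<forall>i<m. \<forall>x\<in>fxDm P Q m. F i x \<in> fxD P Q"
    and "strongly_connected_sn P Q m F"
  shows "\<forall>E\<in>phase P Q m. \<forall>\<epsilon>>0. \<exists>E'\<in>phase P Q m. \<exists>k\<ge>1.
           (GF P Q m F ^^ k) E' = E' \<and> dE P Q m E E' < \<epsilon>"
proof (intro ballI allI impI)
  fix E :: "(nat \<Rightarrow> nat \<Rightarrow> real) \<times> (nat \<Rightarrow> real)" and \<epsilon> :: real
  assume E: "E \<in> phase P Q m" and ep: "\<epsilon> > 0"
  obtain W x where Wx: "E = (W, x)" by (cases E)
  have W1: "\<forall>i<m. \<forall>k. W i k \<in> fxD P Q" and W2: "\<forall>i\<ge>m. W i = (\<lambda>_. 0)"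
    and x: "x \<in> fxDm P Q m" using E Wx by (auto simp: phase_def)
  define B :: real where "B = real m * 2 ^ P"
  have Bpos: "B > 0" using assms(1) by (simp add: B_def)
  obtain n0 where n0: "(1/2::real) ^ n0 < \<epsilon> / B"
    using real_arch_pow_inv[of "\<epsilon> / B" "1/2"] ep Bpos by auto
  define n where "n = Suc n0"
  have nge: "n \<ge> 1" by (simp add: n_def)
  have "(1/2::real) ^ n \<le> (1/2) ^ n0" unfolding n_def by (simp add: power_decreasing)
  hence "(1/2::real) ^ n < \<epsilon> / B" using n0 by linarith
  hence small: "B * (1/2) ^ n < \<epsilon>" using Bpos by (simp add: field_simps)
  define CW where "CW = (\<lambda>t i. W i t)"
  define y where "y = run P Q m F CW n x"
  have y: "y \<in> fxDm P Q m" unfolding y_def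
    by (rule run_in[OF assms(3) x]) (use W1 in \<open>auto simp: CW_def\<close>)
  have "(y, x) \<in> (state_edges P Q m F)\<^sup>*" using assms(4) y x by (auto simp: strongly_connected_sn_def)
  then obtain L Cs where Cs: "\<forall>t<L. (\<forall>i<m. Cs t i \<in> fxD P Q) \<and> (\<forall>i\<ge>m. Cs t i = 0)"
    and runCs: "run P Q m F Cs L y = x" using path by blast
  define C where "C = (\<lambda>t. if t < n then CW t else Cs (t - n))"
  define T where "T = n + L"
  have Tpos: "T > 0" using nge by (simp add: T_def)
  define W' where "W' = (\<lambda>i k. C (k mod T) i)"
  define E' where "E' = (W', x)"
  have Cvalid: "\<forall>i<m. C t i \<in> fxD P Q" "\<forall>i\<ge>m. C t i = 0" if "t < T" for t
    using that Cs W1 W2 by (auto simp: C_def CW_def T_def)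
  have E'in: "E' \<in> phase P Q m"
    unfolding E'_def phase_def using Cvalid Tpos x by (auto simp: W'_def)
  have per: "(GF P Q m F ^^ T) E' = E'"
  proof -
    have f: "(\<lambda>i j. W' i (j + T)) = W'" by (simp add: W'_def)
    have "run P Q m F (\<lambda>t i. W' i t) T x = run P Q m F C T x"
      by (rule run_cong) (auto simp: W'_def)
    also have "\<dots> = run P Q m F (\<lambda>t. C (n + t)) L (run P Q m F C n x)"
      unfolding T_def by (rule run_add)
    also have "run P Q m F C n x = y" unfolding y_def
      by (rule run_cong) (auto simp: C_def)
    also have "(\<lambda>t. C (n + t)) = Cs" by (auto simp: C_def)
    finally have "run P Q m F (\<lambda>t i. W' i t) T x = x" using runCs by simp
    thus ?thesis unfolding E'_def GF_pow f by simp
  qed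
  have bnd: "(\<Sum>k. \<bar>W i k - W' i k\<bar> / 2 ^ ((P + Q) * Suc k)) \<le> 2 ^ P * (1/2) ^ n"
    if i: "i < m" for i
  proof (rule tail_bound; intro allI impI conjI)
    fix k assume "k < n"
    hence "W' i k = W i k" using Tpos by (simp add: W'_def C_def CW_def T_def)
    thus "\<bar>W i k - W' i k\<bar> / 2 ^ ((P + Q) * Suc k) = 0" by simp
  next
    fix k
    show "0 \<le> \<bar>W i k - W' i k\<bar> / 2 ^ ((P + Q) * Suc k)" by simp
    have a: "W i k \<in> fxD P Q" using W1 i by auto
    have b: "W' i k \<in> fxD P Q" using Cvalid[of "k mod T"] Tpos i by (simp add: W'_def)
    have d: "\<bar>W i k - W' i k\<bar> \<le> 2 ^ P"
      using fxD_bounds[OF a] fxD_bounds[OF b] by linarith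
    have e: "(2::real) ^ Suc k \<le> 2 ^ ((P + Q) * Suc k)"
    proof (intro power_increasing)
      show "Suc k \<le> (P + Q) * Suc k" using mult_le_mono1[OF assms(2), of "Suc k"] by simp
    qed simp
    have "\<bar>W i k - W' i k\<bar> / 2 ^ ((P + Q) * Suc k) \<le> 2 ^ P / 2 ^ Suc k"
      by (rule frac_le) (use d e in auto)
    also have "\<dots> = 2 ^ P * (1/2) ^ Suc k" by (simp add: power_one_over field_simps)
    finally show "\<bar>W i k - W' i k\<bar> / 2 ^ ((P + Q) * Suc k) \<le> 2 ^ P * (1/2) ^ Suc k" .
  qed
  have "dE P Q m E E' = (\<Sum>i<m. \<Sum>k. \<bar>W i k - W' i k\<bar> / 2 ^ ((P + Q) * Suc k))"
    by (simp add: dE_def Wx E'_def)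
  also have "\<dots> \<le> (\<Sum>i<m. 2 ^ P * (1/2) ^ n)" by (rule sum_mono) (use bnd in auto)
  also have "\<dots> = B * (1/2) ^ n" by (simp add: B_def)
  finally have "dE P Q m E E' < \<epsilon>" using small by linarith
  thus "\<exists>E'\<in>phase P Q m. \<exists>k\<ge>1. (GF P Q m F ^^ k) E' = E' \<and> dE P Q m E E' < \<epsilon>"
    using E'in per Tpos by (intro bexI[of _ E'] exI[of _ T]) auto
qed

end
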